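(* Let $S^0$ be an inverse semigroup with semilattice of idempotents $E^0$. Let $L$ be a left inverse semigroup and $R$ a right inverse semigroup and suppose that $S^0$ is a common quasi-ideal inverse transversal of $L$ and $R$; for $x$ in $L$ or $R$ let $x^0$ denote the unique inverse of $x$ lying in $S^0$. Let $R\times L\to S^0$ be a map denoted by $(a,x)\mapsto a\ast x$ and suppose that $\ast$ satisfies (1) for all $y,z\in L$, $a,b\in R$ with $y^0=b^0$, $(a\ast y)(b^0b)\ast z = a\ast (yy^0)(b\ast z)$; (2) if $a\in S^0$ or $x\in S^0$ then $a\ast x = ax$; (3) for all $e\in E(R)$, $f \in E(L)$, $e\ast f \in E^0$. Let $T = \{(x,a)\in L\times R : x^0 = a^0\}$ and define $(x,a)(y,b)=((xx^0)(a\ast y),(a\ast y)(b^0b))$. Then $T$ is a regular semigroup with a multiplicative inverse transversal $T^0$ with $T^0\cong S^0$. Moreover every regular semigroup with a multiplicative inverse transversal can be constructed (up to isomorphism) in this way.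
   Context: An inverse subsemigroup $S^0$ of a regular semigroup $S$ is an inverse transversal if each $x\in S$ has exactly one inverse $x^0$ in $S^0$; it is a quasi-ideal if $S^0SS^0\subseteq S^0$, and multiplicative if $\Lambda I\subseteq E^0$ where $I=\{xx^0:x\in S\}$ and $\Lambda=\{x^0x:x\in S\}$. A left (right) inverse semigroup is a regular semigroup whose idempotents form a left (right) regular band. *)

theory Defs
  imports Main
begin

definition semigrp :: "'a set \<Rightarrow> ('a \<Rightarrow> 'a \<Rightarrow> 'a) \<Rightarrow> bool" where
  "semigrp S m \<longleftrightarrow> (\<forall>x\<in>S. \<forall>y\<in>S. m x y \<in> S) \<and>
     (\<forall>x\<in>S. \<forall>y\<in>S. \<forall>z\<in>S. m (m x y) z = m x (m y z))"

definition idems :: "'a set \<Rightarrow> ('a \<Rightarrow> 'a \<Rightarrow> 'a) \<Rightarrow> 'a set" where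
  "idems S m = {e \<in> S. m e e = e}"

definition is_inv :: "('a \<Rightarrow> 'a \<Rightarrow> 'a) \<Rightarrow> 'a \<Rightarrow> 'a \<Rightarrow> bool" where
  "is_inv m x y \<longleftrightarrow> m (m x y) x = x \<and> m (m y x) y = y"

definition regular_semigrp :: "'a set \<Rightarrow> ('a \<Rightarrow> 'a \<Rightarrow> 'a) \<Rightarrow> bool" where
  "regular_semigrp S m \<longleftrightarrow> semigrp S m \<and> (\<forall>x\<in>S. \<exists>y\<in>S. m (m x y) x = x)"

definition inverse_semigrp :: "'a set \<Rightarrow> ('a \<Rightarrow> 'a \<Rightarrow> 'a) \<Rightarrow> bool" where
  "inverse_semigrp S m \<longleftrightarrow> semigrp S m \<and> (\<forall>x\<in>S. \<exists>!y. y \<in> S \<and> is_inv m x y)"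

definition left_inverse_semigrp :: "'a set \<Rightarrow> ('a \<Rightarrow> 'a \<Rightarrow> 'a) \<Rightarrow> bool" where
  "left_inverse_semigrp S m \<longleftrightarrow> regular_semigrp S m \<and>
     (\<forall>e\<in>idems S m. \<forall>f\<in>idems S m. m e f \<in> idems S m \<and> m (m e f) e = m e f)"

definition right_inverse_semigrp :: "'a set \<Rightarrow> ('a \<Rightarrow> 'a \<Rightarrow> 'a) \<Rightarrow> bool" where
  "right_inverse_semigrp S m \<longleftrightarrow> regular_semigrp S m \<and>
     (\<forall>e\<in>idems S m. \<forall>f\<in>idems S m. m e f \<in> idems S m \<and> m (m e f) e = m f e)"

definition inverse_transversal :: "'a set \<Rightarrow> ('a \<Rightarrow> 'a \<Rightarrow> 'a) \<Rightarrow> 'a set \<Rightarrow> bool" where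
  "inverse_transversal S m S0 \<longleftrightarrow> S0 \<subseteq> S \<and> inverse_semigrp S0 m \<and>
     (\<forall>x\<in>S. \<exists>!y. y \<in> S0 \<and> is_inv m x y)"

definition tinv :: "('a \<Rightarrow> 'a \<Rightarrow> 'a) \<Rightarrow> 'a set \<Rightarrow> 'a \<Rightarrow> 'a" where
  "tinv m S0 x = (THE y. y \<in> S0 \<and> is_inv m x y)"

definition quasi_ideal :: "'a set \<Rightarrow> ('a \<Rightarrow> 'a \<Rightarrow> 'a) \<Rightarrow> 'a set \<Rightarrow> bool" where
  "quasi_ideal S m S0 \<longleftrightarrow> (\<forall>s\<in>S0. \<forall>x\<in>S. \<forall>t\<in>S0. m (m s x) t \<in> S0)"

text \<open>Multiplicative: Lambda I is contained in E^0, with I = {x x^0}, Lambda = {x^0 x}.\<close>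
definition multiplicative :: "'a set \<Rightarrow> ('a \<Rightarrow> 'a \<Rightarrow> 'a) \<Rightarrow> 'a set \<Rightarrow> bool" where
  "multiplicative S m S0 \<longleftrightarrow>
     (\<forall>x\<in>S. \<forall>y\<in>S. m (m (tinv m S0 x) x) (m y (tinv m S0 y)) \<in> idems S0 m)"

definition semigrp_iso :: "'a set \<Rightarrow> ('a \<Rightarrow> 'a \<Rightarrow> 'a) \<Rightarrow> 'b set \<Rightarrow> ('b \<Rightarrow> 'b \<Rightarrow> 'b) \<Rightarrow> ('a \<Rightarrow> 'b) \<Rightarrow> bool" where
  "semigrp_iso A mA B mB f \<longleftrightarrow> bij_betw f A B \<and> (\<forall>x\<in>A. \<forall>y\<in>A. f (mA x y) = mB (f x) (f y))"

definition semigrp_isomorphic :: "'a set \<Rightarrow> ('a \<Rightarrow> 'a \<Rightarrow> 'a) \<Rightarrow> 'b set \<Rightarrow> ('b \<Rightarrow> 'b \<Rightarrow> 'b) \<Rightarrow> bool" where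
  "semigrp_isomorphic A mA B mB \<longleftrightarrow> (\<exists>f. semigrp_iso A mA B mB f)"

text \<open>The data of the construction: S0 an inverse semigroup, L (with product mL) a left
  inverse semigroup, R (with product mR) a right inverse semigroup, S0 a common quasi-ideal
  inverse transversal of L and R (the products of L and R agree on S0), and a map
  star : R x L -> S0 satisfying (1)-(3).\<close>
definition construction_data ::
  "'a set \<Rightarrow> 'a set \<Rightarrow> ('a \<Rightarrow> 'a \<Rightarrow> 'a) \<Rightarrow> 'a set \<Rightarrow> ('a \<Rightarrow> 'a \<Rightarrow> 'a) \<Rightarrow> ('a \<Rightarrow> 'a \<Rightarrow> 'a) \<Rightarrow> bool" where
  "construction_data S0 L mL R mR star \<longleftrightarrow>
     inverse_semigrp S0 mL \<and>
     left_inverse_semigrp L mL \<and> right_inverse_semigrp R mR \<and>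
     (\<forall>s\<in>S0. \<forall>t\<in>S0. mL s t = mR s t) \<and>
     inverse_transversal L mL S0 \<and> quasi_ideal L mL S0 \<and>
     inverse_transversal R mR S0 \<and> quasi_ideal R mR S0 \<and>
     (\<forall>a\<in>R. \<forall>x\<in>L. star a x \<in> S0) \<and>
     (\<forall>y\<in>L. \<forall>z\<in>L. \<forall>a\<in>R. \<forall>b\<in>R. tinv mL S0 y = tinv mR S0 b \<longrightarrow>
        star (mR (star a y) (mR (tinv mR S0 b) b)) z
          = star a (mL (mL y (tinv mL S0 y)) (star b z))) \<and>
     (\<forall>a\<in>R. \<forall>x\<in>L. a \<in> S0 \<longrightarrow> star a x = mL a x) \<and>
     (\<forall>a\<in>R. \<forall>x\<in>L. x \<in> S0 \<longrightarrow> star a x = mR a x) \<and>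
     (\<forall>e\<in>idems R mR. \<forall>f\<in>idems L mL. star e f \<in> idems S0 mL)"

definition Tset :: "'a set \<Rightarrow> 'a set \<Rightarrow> ('a \<Rightarrow> 'a \<Rightarrow> 'a) \<Rightarrow> 'a set \<Rightarrow> ('a \<Rightarrow> 'a \<Rightarrow> 'a) \<Rightarrow> ('a \<times> 'a) set" where
  "Tset S0 L mL R mR = {(x, a). x \<in> L \<and> a \<in> R \<and> tinv mL S0 x = tinv mR S0 a}"

definition Tmult :: "'a set \<Rightarrow> ('a \<Rightarrow> 'a \<Rightarrow> 'a) \<Rightarrow> ('a \<Rightarrow> 'a \<Rightarrow> 'a) \<Rightarrow> ('a \<Rightarrow> 'a \<Rightarrow> 'a)
     \<Rightarrow> 'a \<times> 'a \<Rightarrow> 'a \<times> 'a \<Rightarrow> 'a \<times> 'a" where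
  "Tmult S0 mL mR star p q =
     (case p of (x, a) \<Rightarrow> case q of (y, b) \<Rightarrow>
        (mL (mL x (tinv mL S0 x)) (star a y), mR (star a y) (mR (tinv mR S0 b) b)))"

end

theory Submission
  imports Defs
begin


locale itr =
  fixes S :: "'a set" and m :: "'a \<Rightarrow> 'a \<Rightarrow> 'a" and S0 :: "'a set"
  assumes sg: "semigrp S m" and tr: "inverse_transversal S m S0"
begin

abbreviation t where "t x \<equiv> tinv m S0 x"

lemma cl[simp]: "x \<in> S \<Longrightarrow> y \<in> S \<Longrightarrow> m x y \<in> S"
  using sg unfolding semigrp_def by blast
lemma assoc[simp]: "x \<in> S \<Longrightarrow> y \<in> S \<Longrightarrow> z \<in> S \<Longrightarrow> m (m x y) z = m x (m y z)"
  using sg unfolding semigrp_def by blast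
lemma sub: "S0 \<subseteq> S" using tr unfolding inverse_transversal_def by blast
lemma subD[simp]: "s \<in> S0 \<Longrightarrow> s \<in> S" using sub by blast
lemma cl0[simp]: "x \<in> S0 \<Longrightarrow> y \<in> S0 \<Longrightarrow> m x y \<in> S0"
  using tr unfolding inverse_transversal_def inverse_semigrp_def semigrp_def by blast

lemma ex1: "x \<in> S \<Longrightarrow> \<exists>!y. y \<in> S0 \<and> is_inv m x y"
  using tr unfolding inverse_transversal_def by blast

lemma t_prop: "x \<in> S \<Longrightarrow> t x \<in> S0 \<and> is_inv m x (t x)"
  unfolding tinv_def by (rule theI'[OF ex1])

lemma t_mem[simp]: "x \<in> S \<Longrightarrow> t x \<in> S0" using t_prop by blast
lemma t1[simp]: "x \<in> S \<Longrightarrow> m x (m (t x) x) = x"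
  using t_prop[of x] unfolding is_inv_def by simp
lemma t2[simp]: "x \<in> S \<Longrightarrow> m (t x) (m x (t x)) = t x"
  using t_prop[of x] unfolding is_inv_def by simp
lemma t1'[simp]: "x \<in> S \<Longrightarrow> z \<in> S \<Longrightarrow> m x (m (t x) (m x z)) = m x z"
  by (metis assoc cl t1 subD t_mem)
lemma t2'[simp]: "x \<in> S \<Longrightarrow> z \<in> S \<Longrightarrow> m (t x) (m x (m (t x) z)) = m (t x) z"
  by (metis assoc cl t2 subD t_mem)

lemma t_uniq: "x \<in> S \<Longrightarrow> y \<in> S0 \<Longrightarrow> is_inv m x y \<Longrightarrow> t x = y"
  using ex1[of x] t_prop[of x] by blast

lemma t_uniq': "x \<in> S \<Longrightarrow> y \<in> S0 \<Longrightarrow> m x (m y x) = x \<Longrightarrow> m y (m x y) = y \<Longrightarrow> t x = y"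
  by (rule t_uniq) (auto simp: is_inv_def)

lemma tt[simp]: "s \<in> S0 \<Longrightarrow> t (t s) = s"
  by (rule t_uniq') auto

lemma idem_t: "e \<in> S0 \<Longrightarrow> m e e = e \<Longrightarrow> t e = e"
  by (rule t_uniq') auto

lemma idz: "m e e = e \<Longrightarrow> e \<in> S \<Longrightarrow> z \<in> S \<Longrightarrow> m e (m e z) = m e z"
  by (metis assoc)

lemma idem_prod:
  assumes e: "e \<in> S0" "m e e = e" and f: "f \<in> S0" "m f f = f"
  shows "m (m e f) (m e f) = m e f"
proof -
  have ee: "\<And>z. z \<in> S \<Longrightarrow> m e (m e z) = m e z" using e by (metis assoc subD)
  have ff: "\<And>z. z \<in> S \<Longrightarrow> m f (m f z) = m f z" using f by (metis assoc subD)
  define a where "a = m e f"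
  define b where "b = t a"
  have aS: "a \<in> S0" "b \<in> S0" unfolding a_def b_def using e f by auto
  have aba: "m a (m b a) = a" using aS unfolding b_def by simp
  have bab: "m b (m a b) = b" using aS unfolding b_def by simp
  have bab': "\<And>z. z \<in> S \<Longrightarrow> m b (m e (m f (m b z))) = m b z"
  proof -
    fix z assume z: "z \<in> S"
    have "m (m b (m a b)) z = m b z" using bab by simp
    thus "m b (m e (m f (m b z))) = m b z" using aS e f z unfolding a_def by simp
  qed
  have aba': "\<And>z. z \<in> S \<Longrightarrow> m e (m f (m b (m e (m f z)))) = m e (m f z)"
  proof -
    fix z assume z: "z \<in> S"
    have "m (m a (m b a)) z = m a z" using aba by simp
    thus "m e (m f (m b (m e (m f z)))) = m e (m f z)" using aS e f z unfolding a_def by simp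
  qed
  have c: "t a = m f (m b e)"
  proof (rule t_uniq')
    show "a \<in> S" using aS by simp
    show "m f (m b e) \<in> S0" using aS e f by simp
    show "m a (m (m f (m b e)) a) = a"
      using aba aS e f unfolding a_def by (simp add: ee ff aba')
    show "m (m f (m b e)) (m a (m f (m b e))) = m f (m b e)"
      using aS e f unfolding a_def by (simp add: ee ff bab')
  qed
  have bfe: "m f (m b e) = b" using c unfolding b_def by simp
  have "m b b = m (m f (m b e)) (m f (m b e))" by (simp only: bfe)
  also have "\<dots> = m f (m b e)" using aS e f by (simp add: bab')
  finally have bb: "m b b = b" using bfe by simp
  have "t b = b" by (rule idem_t[OF aS(2) bb])
  moreover have "t b = a" unfolding b_def using aS by simp
  ultimately have ab: "a = b" by simp
  show ?thesis using ab bb unfolding a_def by simp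
qed

lemma idem_comm:
  assumes e: "e \<in> S0" "m e e = e" and f: "f \<in> S0" "m f f = f"
  shows "m e f = m f e" "m (m e f) (m e f) = m e f"
proof -
  have i1: "m (m e f) (m e f) = m e f" by (rule idem_prod[OF e f])
  have i2: "m (m f e) (m f e) = m f e" by (rule idem_prod[OF f e])
  have t1: "t (m e f) = m e f" by (rule idem_t) (use e f i1 in auto)
  have "t (m e f) = m f e"
  proof (rule t_uniq')
    have "m (m e f) (m (m f e) (m e f)) = m (m e f) (m e f)" using e f by (simp add: idz)
    thus "m (m e f) (m (m f e) (m e f)) = m e f" using i1 by simp
    have "m (m f e) (m (m e f) (m f e)) = m (m f e) (m f e)" using e f by (simp add: idz)
    thus "m (m f e) (m (m e f) (m f e)) = m f e" using i2 by simp
  qed (use e f in auto)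
  thus "m e f = m f e" using t1 by simp
  show "m (m e f) (m e f) = m e f" by (rule i1)
qed

lemma idl[simp]: "s \<in> S \<Longrightarrow> m (t s) s \<in> S0 \<Longrightarrow> m (m (t s) s) (m (t s) s) = m (t s) s"
  by simp
lemma idem_r: "s \<in> S0 \<Longrightarrow> m (m s (t s)) (m s (t s)) = m s (t s)" by simp
lemma idem_l: "s \<in> S0 \<Longrightarrow> m (m (t s) s) (m (t s) s) = m (t s) s" by simp

lemma t_mult:
  assumes s: "s \<in> S0" and r: "r \<in> S0"
  shows "t (m s r) = m (t r) (t s)"
proof -
  have com: "m (m r (t r)) (m (t s) s) = m (m (t s) s) (m r (t r))"
    by (rule idem_comm) (use s r idem_r idem_l in auto)
  have comz: "\<And>z. z \<in> S \<Longrightarrow> m r (m (t r) (m (t s) (m s z))) = m (t s) (m s (m r (m (t r) z)))"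
  proof -
    fix z assume z: "z \<in> S"
    have "m (m (m r (t r)) (m (t s) s)) z = m (m (m (t s) s) (m r (t r))) z" using com by simp
    thus "?thesis z" using s r z by simp
  qed
  show ?thesis
  proof (rule t_uniq')
    show "m (m s r) (m (m (t r) (t s)) (m s r)) = m s r" using s r by (simp add: comz)
    show "m (m (t r) (t s)) (m (m s r) (m (t r) (t s))) = m (t r) (t s)" using s r by (simp flip: comz)
  qed (use s r in auto)
qed

lemma t_idem: "e \<in> S0 \<Longrightarrow> m e e = e \<Longrightarrow> t e = e" by (rule idem_t)

end



lemma itr_of_inv: "inverse_semigrp S0 m \<Longrightarrow> itr S0 m S0"
  unfolding itr_def inverse_transversal_def inverse_semigrp_def by auto

locale cdat =
  fixes S0 L mL R mR star
  assumes cd: "construction_data S0 L mL R mR star"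
begin

abbreviation tL where "tL \<equiv> tinv mL S0"
abbreviation tR where "tR \<equiv> tinv mR S0"

lemma cdL: "left_inverse_semigrp L mL" and cdR: "right_inverse_semigrp R mR"
  and agree: "s \<in> S0 \<Longrightarrow> r \<in> S0 \<Longrightarrow> mR s r = mL s r"
  and star_in[simp]: "a \<in> R \<Longrightarrow> x \<in> L \<Longrightarrow> star a x \<in> S0"
  and ax1: "y \<in> L \<Longrightarrow> z \<in> L \<Longrightarrow> a \<in> R \<Longrightarrow> b \<in> R \<Longrightarrow> tL y = tR b \<Longrightarrow>
        star (mR (star a y) (mR (tR b) b)) z = star a (mL (mL y (tL y)) (star b z))"
  and ax2l: "a \<in> R \<Longrightarrow> x \<in> L \<Longrightarrow> a \<in> S0 \<Longrightarrow> star a x = mL a x"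
  and ax2r: "a \<in> R \<Longrightarrow> x \<in> L \<Longrightarrow> x \<in> S0 \<Longrightarrow> star a x = mR a x"
  and ax3: "e \<in> idems R mR \<Longrightarrow> f \<in> idems L mL \<Longrightarrow> star e f \<in> idems S0 mL"
  and qL: "quasi_ideal L mL S0" and qR: "quasi_ideal R mR S0"
  using cd unfolding construction_data_def by auto

sublocale Lt: itr L mL S0
  using cd unfolding construction_data_def itr_def left_inverse_semigrp_def regular_semigrp_def by auto
sublocale Rt: itr R mR S0
  using cd unfolding construction_data_def itr_def right_inverse_semigrp_def regular_semigrp_def by auto

lemma tRL[simp]: "s \<in> S0 \<Longrightarrow> tR s = tL s"
  by (rule Rt.t_uniq') (auto simp: agree)

lemma R0t1[simp]: "s \<in> S0 \<Longrightarrow> z \<in> R \<Longrightarrow> mR s (mR (tL s) (mR s z)) = mR s z"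
  using Rt.t1'[of s z] by simp
lemma R0t2[simp]: "s \<in> S0 \<Longrightarrow> z \<in> R \<Longrightarrow> mR (tL s) (mR s (mR (tL s) z)) = mR (tL s) z"
  using Rt.t2'[of s z] by simp
lemma R0t1'[simp]: "s \<in> S0 \<Longrightarrow> mR s (mR (tL s) s) = s"
  using Rt.t1[of s] by simp
lemma R0t2'[simp]: "s \<in> S0 \<Longrightarrow> mR (tL s) (mR s (tL s)) = tL s"
  using Rt.t2[of s] by simp

lemma mixR[simp]: "s \<in> S0 \<Longrightarrow> r \<in> S0 \<Longrightarrow> z \<in> R \<Longrightarrow> mR (mL s r) z = mR s (mR r z)"
  by (simp flip: agree)
lemma mixL[simp]: "s \<in> S0 \<Longrightarrow> r \<in> S0 \<Longrightarrow> z \<in> L \<Longrightarrow> mL (mR s r) z = mL s (mL r z)"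
  by (simp add: agree)
lemma stl[simp]: "s \<in> S0 \<Longrightarrow> x \<in> L \<Longrightarrow> star s x = mL s x"
  by (rule ax2l) auto
lemma str[simp]: "a \<in> R \<Longrightarrow> s \<in> S0 \<Longrightarrow> star a s = mR a s"
  by (rule ax2r) auto
lemma mL_S0[simp]: "s \<in> S0 \<Longrightarrow> x \<in> L \<Longrightarrow> mL s x \<in> S0"
  by (metis Rt.subD star_in stl)
lemma mR_S0[simp]: "a \<in> R \<Longrightarrow> s \<in> S0 \<Longrightarrow> mR a s \<in> S0"
  by (metis Lt.subD star_in str)

lemma MA: "a \<in> R \<Longrightarrow> s \<in> S0 \<Longrightarrow> z \<in> L \<Longrightarrow> mL (mR a s) z = mR a (mL s z)"
proof -
  assume a: "a \<in> R" and s: "s \<in> S0" and z: "z \<in> L"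
  have "star (mR (star a s) (mR (tR s) s)) z = star a (mL (mL s (tL s)) (star s z))"
    by (rule ax1) (use a s z in auto)
  thus ?thesis using a s z by simp
qed

lemma D4: assumes x: "x \<in> L" shows "mL (tL x) x = mL (tL x) (tL (tL x))"
proof -
  let ?e = "mL (tL x) x" and ?f = "mL (tL x) (tL (tL x))"
  have e: "?e \<in> idems L mL" using x unfolding idems_def by simp
  have f: "?f \<in> idems L mL" using x unfolding idems_def by simp
  have ef: "mL ?e ?f = ?f" using x by simp
  have fe: "mL ?f ?e = ?e" using x by simp
  have "mL (mL ?e ?f) ?e = mL ?e ?f" using cdL e f unfolding left_inverse_semigrp_def by blast
  thus ?thesis using ef fe by simp
qed

lemma D4R: assumes a: "a \<in> R" shows "mR a (tR a) = mL (tL (tR a)) (tR a)"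
proof -
  let ?e = "mR a (tR a)" and ?f = "mR (tR (tR a)) (tR a)"
  have e: "?e \<in> idems R mR" using a unfolding idems_def by simp
  have f: "?f \<in> idems R mR" using a unfolding idems_def by simp
  have ef: "mR ?e ?f = ?e" using a by simp
  have fe: "mR ?f ?e = ?f" using a by simp
  have "mR (mR ?e ?f) ?e = mR ?f ?e" using cdR e f unfolding right_inverse_semigrp_def by blast
  thus ?thesis using ef fe a by (simp add: agree)
qed

lemma D5L[simp]: "x \<in> L \<Longrightarrow> mL x (mL (tL x) (tL (tL x))) = x"
  by (simp flip: D4)

lemma D5R[simp]: assumes a: "a \<in> R" shows "mR (tL (tR a)) (mR (tR a) a) = a"
proof -
  have "mR (mR a (tR a)) a = a" using a by simp
  hence "mR (mR (tL (tR a)) (tR a)) a = a" using a by (simp add: D4R agree del: Rt.assoc)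
  thus ?thesis using a by simp
qed

lemma L1: assumes a: "a \<in> R" and z: "z \<in> L"
  shows "mL (tL (tR a)) (mL (tR a) (star a z)) = star a z"
proof -
  let ?u = "tR a"
  let ?c = "mL (tL ?u) ?u" and ?y = "tL ?u"
  have u: "?u \<in> S0" using a by simp
  have "star (mR (star ?c ?y) (mR (tR a) a)) z = star ?c (mL (mL ?y (tL ?y)) (star a z))"
    by (rule ax1) (use a z u in auto)
  moreover have "star ?c ?y = tL ?u" using u by simp
  moreover have "star ?c (mL (mL ?y (tL ?y)) (star a z)) = mL (tL ?u) (mL ?u (star a z))"
    using u a z by simp
  ultimately show ?thesis using a by simp
qed

lemma R1: assumes a: "a \<in> R" and y: "y \<in> L"
  shows "mL (star a y) (mL (tL y) (tL (tL y))) = star a y"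
proof -
  let ?v = "tL y"
  let ?b = "tL ?v" and ?z = "mL ?v (tL ?v)"
  have v: "?v \<in> S0" using y by simp
  have "star (mR (star a y) (mR (tR ?b) ?b)) ?z = star a (mL (mL y (tL y)) (star ?b ?z))"
    by (rule ax1) (use a y v in auto)
  moreover have "star ?b ?z = ?b" using v by simp
  moreover have "mL (mL y (tL y)) ?b = y" using y by simp
  moreover have "mR (star a y) (mR (tR ?b) ?b) = mL (star a y) ?z" using v a y
    by (simp add: agree)
  moreover have "star (mL (star a y) ?z) ?z = mL (star a y) ?z" using v a y by simp
  ultimately show ?thesis by simp
qed

lemma TL: assumes x: "x \<in> L" and w: "w \<in> S0"
  and H: "mL (tL (tL x)) (mL (tL x) w) = w"
  shows "tL (mL x (mL (tL x) w)) = tL w"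
proof -
  define u where "u = tL x"
  define W where "W = tL w"
  have u: "u \<in> S0" and W: "W \<in> S0" using x w unfolding u_def W_def by auto
  have H': "mL W (mL (tL u) u) = W"
  proof -
    have "tL (mL (tL u) (mL u w)) = W" using H unfolding u_def W_def by simp
    thus ?thesis using u w unfolding W_def by (simp add: Lt.t_mult)
  qed
  have "mL W (mL x u) = mL (mL W (mL (tL u) u)) (mL x u)" using H' by simp
  also have "\<dots> = mL W (mL (tL u) u)" using u W x unfolding u_def by simp
  finally have K: "mL W (mL x u) = W" using H' by simp
  have Kz: "\<And>z. z \<in> L \<Longrightarrow> mL W (mL x (mL u z)) = mL W z"
  proof -
    fix z assume z: "z \<in> L"
    have "mL (mL W (mL x u)) z = mL W z" using K by simp
    thus "?thesis z" using z u W x by simp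
  qed
  show ?thesis unfolding u_def[symmetric]
    by (rule Lt.t_uniq') (use x u w W in \<open>simp_all add: Kz[unfolded W_def]\<close>)
qed

lemma TR: assumes b: "b \<in> R" and w: "w \<in> S0"
  and H: "mL w (mL (tR b) (tL (tR b))) = w"
  shows "tR (mR w (mR (tR b) b)) = tL w"
proof -
  define v where "v = tR b"
  define W where "W = tL w"
  have v: "v \<in> S0" and W: "W \<in> S0" using b w unfolding v_def W_def by auto
  have H': "mL v (mL (tL v) W) = W"
  proof -
    have "tL (mL w (mL v (tL v))) = W" using H unfolding v_def W_def by simp
    thus ?thesis using v w unfolding W_def by (simp add: Lt.t_mult)
  qed
  have "mR v (mR b W) = mR v (mR b (mR v (mR (tL v) W)))"
    using H' v W by (simp add: agree)
  also have "\<dots> = mR v (mR (tL v) W)" unfolding v_def using b W by simp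
  also have "\<dots> = W" using H' v W by (simp add: agree)
  finally have K: "mR v (mR b W) = W" .
  have Kz: "\<And>z. z \<in> R \<Longrightarrow> mR v (mR b (mR W z)) = mR W z"
  proof -
    fix z assume z: "z \<in> R"
    have "mR (mR v (mR b W)) z = mR W z" using K by simp
    thus "?thesis z" using z v W b by simp
  qed
  show ?thesis unfolding v_def[symmetric]
    by (rule Rt.t_uniq') (use b v w W in \<open>simp_all add: Kz[unfolded W_def] K[unfolded W_def]\<close>)
qed

end



context cdat begin

abbreviation T where "T \<equiv> Tset S0 L mL R mR"
abbreviation tm where "tm \<equiv> Tmult S0 mL mR star"

lemma Tm: "tm (x,a) (y,b) = (mL (mL x (tL x)) (star a y), mR (star a y) (mR (tR b) b))"
  by (simp add: Tmult_def)
lemma Tmem: "(x,a) \<in> T \<longleftrightarrow> x \<in> L \<and> a \<in> R \<and> tL x = tR a"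
  by (simp add: Tset_def)

lemma prodT:
  assumes x: "x \<in> L" and a: "a \<in> R" and xa: "tL x = tR a"
    and y: "y \<in> L" and b: "b \<in> R" and yb: "tL y = tR b"
  shows "tL (mL x (mL (tL x) (star a y))) = tL (star a y)"
    and "tR (mR (star a y) (mR (tR b) b)) = tL (star a y)"
proof -
  show "tL (mL x (mL (tL x) (star a y))) = tL (star a y)"
    by (rule TL) (use x a y L1[OF a y] xa in auto)
  show "tR (mR (star a y) (mR (tR b) b)) = tL (star a y)"
    by (rule TR) (use b a y R1[OF a y] yb in auto)
qed

lemma T_closed: assumes p: "p \<in> T" and q: "q \<in> T" shows "tm p q \<in> T"
proof -
  obtain x a where pa: "p = (x,a)" by (cases p)
  obtain y b where qb: "q = (y,b)" by (cases q)
  have h: "x \<in> L" "a \<in> R" "tL x = tR a" "y \<in> L" "b \<in> R" "tL y = tR b"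
    using p q unfolding pa qb Tmem by auto
  show ?thesis unfolding pa qb Tm Tmem using prodT[OF h] h by simp
qed

lemma T_assoc: assumes p: "p \<in> T" and q: "q \<in> T" and r: "r \<in> T"
  shows "tm (tm p q) r = tm p (tm q r)"
proof -
  obtain x a where pa: "p = (x,a)" by (cases p)
  obtain y b where qb: "q = (y,b)" by (cases q)
  obtain z c where rc: "r = (z,c)" by (cases r)
  have x: "x \<in> L" and a: "a \<in> R" and xa: "tL x = tR a" and y: "y \<in> L" and b: "b \<in> R"
    and yb: "tL y = tR b" and z: "z \<in> L" and c: "c \<in> R" and zc: "tL z = tR c"
    using p q r unfolding pa qb rc Tmem by auto
  define w1 where "w1 = star a y"
  define w2 where "w2 = star b z"
  define P where "P = mL x (mL (tL x) w1)"
  define Q where "Q = mR w1 (mR (tR b) b)"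
  define P2 where "P2 = mL y (mL (tL y) w2)"
  define Q2 where "Q2 = mR w2 (mR (tR c) c)"
  have w: "w1 \<in> S0" "w2 \<in> S0" unfolding w1_def w2_def using a b y z by auto
  have PQ: "P \<in> L" "Q \<in> R" "P2 \<in> L" "Q2 \<in> R" unfolding P_def Q_def P2_def Q2_def
    using w x y b c by auto
  have tP: "tL P = tL w1" "tR Q = tL w1" unfolding P_def Q_def w1_def using prodT[OF x a xa y b yb] by auto
  have tP2: "tL P2 = tL w2" "tR Q2 = tL w2" unfolding P2_def Q2_def w2_def using prodT[OF y b yb z c zc] by auto
  have e1: "tm p q = (P, Q)" unfolding pa qb Tm P_def Q_def w1_def using x w1_def w by simp
  have e2: "tm q r = (P2, Q2)" unfolding qb rc Tm P2_def Q2_def w2_def using y w2_def w by simp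
  define v where "v = star a (mL y (mL (tL y) w2))"
  have v: "v \<in> S0" unfolding v_def using a y w by simp
  have sQ: "star Q z = v" unfolding Q_def w1_def v_def w2_def
    using ax1[OF y z a b yb] y w w2_def by simp
  have sP2: "star a P2 = v" unfolding P2_def v_def ..
  have i: "mL w1 (mL (tL w1) v) = v"
    using L1[OF PQ(2) z] tP w unfolding sQ by simp
  have ii: "mL v (mL (tL w2) w2) = v"
    using R1[OF a PQ(3)] tP2 w unfolding sP2 by simp
  have ii': "mR v (mR (tL w2) (mR w2 (mR (tR c) c))) = mR v (mR (tR c) c)"
  proof -
    have "mR v (mR (tL w2) (mR w2 (mR (tR c) c))) = mR (mR v (mR (tL w2) w2)) (mR (tR c) c)"
      using v w c by simp
    also have "mR v (mR (tL w2) w2) = v" using ii v w by (simp add: agree)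
    finally show ?thesis .
  qed
  have "tm (tm p q) r = (mL x (mL (tL x) (mL w1 (mL (tL w1) v))), mR v (mR (tR c) c))"
    unfolding e1 rc Tm sQ using x w v tP(1) unfolding P_def by simp
  also have "\<dots> = (mL x (mL (tL x) v), mR v (mR (tR c) c))" using i by simp
  also have "\<dots> = tm p (tm q r)"
    unfolding e2 pa Tm sP2 using x w v c ii' tP2(2) unfolding Q2_def by simp
  finally show ?thesis .
qed


lemma T0_prod: "s \<in> S0 \<Longrightarrow> r \<in> S0 \<Longrightarrow> tm (s,s) (r,r) = (mL s r, mL s r)"
  unfolding Tm by (simp add: agree)

lemma T0_sub: "s \<in> S0 \<Longrightarrow> (s,s) \<in> T" unfolding Tmem by simp

lemma au: "a \<in> R \<Longrightarrow> mR a (tR a) = mL (tL (tR a)) (tR a)" by (rule D4R)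

lemma inv_a: assumes x: "x \<in> L" and a: "a \<in> R" and xa: "tL x = tR a"
  shows "tm (x,a) (tL x, tL x) = (mL x (tL x), mL (tL (tL x)) (tL x))"
proof -
  have "mR a (tL x) = mL (tL (tL x)) (tL x)" using au[OF a] xa by simp
  thus ?thesis unfolding Tm using x a by (simp add: agree)
qed

lemma inv_b: assumes x: "x \<in> L" and a: "a \<in> R" and xa: "tL x = tR a"
  shows "tm (mL x (tL x), mL (tL (tL x)) (tL x)) (x,a) = (x,a)"
proof -
  have d5: "mR (tL (tL x)) (mR (tL x) a) = a" using D5R[OF a] xa by simp
  have tX: "tL (mL x (tL x)) = mL (tL (tL x)) (tL x)"
    by (rule Lt.t_uniq') (use x in simp_all)
  have d4: "mL (tL x) x = mL (tL x) (tL (tL x))" by (rule D4[OF x])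
  have d4z: "mL (tL (tL x)) (mL (tL x) x) = tL (tL x)" using x by (simp add: d4)
  show ?thesis unfolding Tm tX using x a d5 d4z xa[symmetric] by simp
qed

lemma inv_c: assumes x: "x \<in> L" and a: "a \<in> R" and xa: "tL x = tR a"
  shows "tm (tL x, tL x) (x,a) = (mL (tL x) (tL (tL x)), mR (tL x) a)"
proof -
  have d4: "mL (tL x) x = mL (tL x) (tL (tL x))" by (rule D4[OF x])
  show ?thesis unfolding Tm using x a d4 xa[symmetric] by simp
qed

lemma inv_d: assumes x: "x \<in> L" and a: "a \<in> R" and xa: "tL x = tR a"
  shows "tm (mL (tL x) (tL (tL x)), mR (tL x) a) (tL x, tL x) = (tL x, tL x)"
proof -
  have au': "mR a (tL x) = mL (tL (tL x)) (tL x)" using au[OF a] xa by simp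
  have s1: "star (mR (tL x) a) (tL x) = tL x"
  proof -
    have "star (mR (tL x) a) (tL x) = mR (tL x) (mR a (tL x))" using x a by simp
    also have "\<dots> = mR (tL x) (mL (tL (tL x)) (tL x))" using au' by simp
    also have "\<dots> = tL x" using x by (simp add: agree)
    finally show ?thesis .
  qed
  have tE: "tL (mL (tL x) (tL (tL x))) = mL (tL x) (tL (tL x))"
    by (rule Lt.t_idem) (use x in simp_all)
  show ?thesis unfolding Tm tE s1 using x by simp
qed

lemma T_inv: assumes x: "x \<in> L" and a: "a \<in> R" and xa: "tL x = tR a"
  shows "is_inv tm (x,a) (tL x, tL x)"
  unfolding is_inv_def using inv_a[OF x a xa] inv_b[OF x a xa] inv_c[OF x a xa] inv_d[OF x a xa]
  by simp


lemma L1s: assumes a: "a \<in> R" and s: "s \<in> S0"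
  shows "mL (tL (tR a)) (mL (tR a) (mR a s)) = mR a s"
  using L1[OF a, of s] a s by simp

lemma T_uniq: assumes x: "x \<in> L" and a: "a \<in> R" and xa: "tL x = tR a" and s: "s \<in> S0"
  and inv: "is_inv tm (x,a) (s,s)"
  shows "s = tL x"
proof -
  let ?u = "tL x"
  let ?\<beta> = "mR a s"
  let ?\<alpha> = "mL s x"
  have u: "?u \<in> S0" using x by simp
  have \<beta>: "?\<beta> \<in> S0" and \<alpha>: "?\<alpha> \<in> S0" using a s x by auto
  have p1: "tm (x,a) (s,s) = (mL x (mL ?u ?\<beta>), ?\<beta>)"
    unfolding Tm using x a s by simp
  have H: "mL (tL ?u) (mL ?u ?\<beta>) = ?\<beta>" using L1s[OF a s] xa by simp
  have tX: "tL (mL x (mL ?u ?\<beta>)) = tL ?\<beta>" by (rule TL) (use x \<beta> H in auto)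
  have p2: "tm (mL x (mL ?u ?\<beta>), ?\<beta>) (x,a) = (mL x (mL ?u (mL ?\<beta> x)), mR (mL ?\<beta> x) (mR ?u a))"
    unfolding Tm tX using x a s \<beta> xa[symmetric] by simp
  have E12: "mL x (mL ?u (mL ?\<beta> x)) = x \<and> mR (mL ?\<beta> x) (mR ?u a) = a"
    using inv p1 p2 unfolding is_inv_def by simp
  hence E1: "mL x (mL ?u (mL ?\<beta> x)) = x" and E2: "mR (mL ?\<beta> x) (mR ?u a) = a" by auto
  have p3: "tm (s,s) (x,a) = (?\<alpha>, mR ?\<alpha> (mR ?u a))"
    unfolding Tm using x a s xa[symmetric] by simp
  have st: "star (mR ?\<alpha> (mR ?u a)) s = mL ?\<alpha> (mL ?u ?\<beta>)"
  proof -
    have "star (mR ?\<alpha> (mR ?u a)) s = mR ?\<alpha> (mR ?u ?\<beta>)" using \<alpha> u a s by simp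
    also have "\<dots> = mL ?\<alpha> (mL ?u ?\<beta>)" using \<alpha> u \<beta> by (simp add: agree)
    finally show ?thesis .
  qed
  have p4: "fst (tm (?\<alpha>, mR ?\<alpha> (mR ?u a)) (s,s)) = mL ?\<alpha> (mL ?u ?\<beta>)"
    unfolding Tm st using \<alpha> u \<beta> by simp
  have E3: "mL ?\<alpha> (mL ?u ?\<beta>) = s"
    using inv p3 p4 unfolding is_inv_def by (metis fst_conv)
  let ?\<sigma> = "mL ?\<alpha> ?u"
  have \<sigma>: "?\<sigma> \<in> S0" using \<alpha> u by simp
  have a\<sigma>: "mR a ?\<sigma> = mL (mL ?\<beta> x) ?u"
  proof -
    have "mR a ?\<sigma> = mR a (mL s (mL x ?u))" using s x by simp
    also have "\<dots> = mL ?\<beta> (mL x ?u)" using MA[OF a s, of "mL x ?u"] x by simp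
    also have "\<dots> = mL (mL ?\<beta> x) ?u" using \<beta> x by simp
    finally show ?thesis .
  qed
  have a\<sigma>a: "mR a (mR ?\<sigma> a) = a"
  proof -
    have "mR a (mR ?\<sigma> a) = mR (mR a ?\<sigma>) a" using a \<sigma> by simp
    also have "\<dots> = mR (mL (mL ?\<beta> x) ?u) a" using a\<sigma> by simp
    also have "\<dots> = mR (mR (mL ?\<beta> x) ?u) a" using \<beta> x u by (simp add: agree)
    also have "\<dots> = a" using E2 \<beta> x u a by simp
    finally show ?thesis .
  qed
  have \<sigma>a\<sigma>: "mR ?\<sigma> (mR a ?\<sigma>) = ?\<sigma>"
  proof -
    have "mR ?\<sigma> (mR a ?\<sigma>) = mL ?\<sigma> (mL (mL ?\<beta> x) ?u)" using a\<sigma> \<sigma> \<beta> x u by (simp add: agree)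
    also have "\<dots> = mL (mL (mL ?\<alpha> (mL ?u ?\<beta>)) x) ?u" using \<alpha> u \<beta> x by simp
    also have "\<dots> = ?\<sigma>" using E3 by simp
    finally show ?thesis .
  qed
  have us: "tR a = ?\<sigma>" by (rule Rt.t_uniq') (use a \<sigma> a\<sigma>a \<sigma>a\<sigma> in auto)
  hence u\<sigma>: "?u = ?\<sigma>" using xa by simp
  let ?\<tau> = "mL ?u ?\<beta>"
  have \<tau>: "?\<tau> \<in> S0" using u \<beta> by simp
  have x\<tau>x: "mL x (mL ?\<tau> x) = x" using E1 x u \<beta> by simp
  have bxub: "mL (mL (mL ?\<beta> x) ?u) ?\<beta> = ?\<beta>"
  proof -
    have "mL (mL (mL ?\<beta> x) ?u) ?\<beta> = mL (mR a ?\<sigma>) ?\<beta>" using a\<sigma> by simp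
    also have "\<dots> = mR (mR a ?\<sigma>) ?\<beta>" using a \<sigma> \<beta> by (simp add: agree)
    also have "\<dots> = mR (mR (mR a ?\<sigma>) a) s" using a \<sigma> s by simp
    also have "\<dots> = ?\<beta>" using a\<sigma>a a \<sigma> by simp
    finally show ?thesis .
  qed
  have \<tau>x\<tau>: "mL ?\<tau> (mL x ?\<tau>) = ?\<tau>"
  proof -
    have "mL ?\<tau> (mL x ?\<tau>) = mL ?u (mL (mL (mL ?\<beta> x) ?u) ?\<beta>)" using u \<beta> x by simp
    also have "\<dots> = ?\<tau>" using bxub by simp
    finally show ?thesis .
  qed
  have u\<tau>: "?u = ?\<tau>" by (rule Lt.t_uniq') (use x \<tau> x\<tau>x \<tau>x\<tau> in auto)
  have "s = mL ?\<alpha> ?\<tau>" using E3 by simp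
  also have "\<dots> = ?\<sigma>" using u\<tau> by simp
  also have "\<dots> = ?u" using u\<sigma> by simp
  finally show ?thesis .
qed


lemma mixR2: "a \<in> R \<Longrightarrow> s \<in> S0 \<Longrightarrow> r \<in> S0 \<Longrightarrow> mR a (mL s r) = mR a (mR s r)"
  by (simp add: agree)

lemma T_mult:
  assumes x: "x \<in> L" and a: "a \<in> R" and xa: "tL x = tR a"
    and y: "y \<in> L" and b: "b \<in> R" and yb: "tL y = tR b"
  shows "\<exists>e. tm (tm (tL x, tL x) (x,a)) (tm (y,b) (tL y, tL y)) = (e,e) \<and> e \<in> S0 \<and> mL e e = e"
proof -
  let ?u = "tL x" and ?v = "tL y"
  have u: "?u \<in> S0" and v: "?v \<in> S0" using x y by auto
  have au': "mR a ?u = mL (tL ?u) ?u" using au[OF a] xa by simp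
  have auz: "\<And>z. z \<in> R \<Longrightarrow> mR a (mR ?u z) = mR (tL ?u) (mR ?u z)"
  proof -
    fix z assume z: "z \<in> R"
    have "mR (mR a ?u) z = mR (mL (tL ?u) ?u) z" using au' by simp
    thus "?thesis z" using a u z by simp
  qed
  let ?ua = "mR ?u a"
  have ua: "?ua \<in> R" using u a by simp
  have tua: "tR ?ua = mL ?u (tL ?u)"
  proof (rule Rt.t_uniq')
    show "mL ?u (tL ?u) \<in> S0" using u by simp
    show "mR ?ua (mR (mL ?u (tL ?u)) ?ua) = ?ua" using u a by (simp add: auz)
    have "mR (mL ?u (tL ?u)) (mR ?ua (mL ?u (tL ?u))) = mR ?u (mR (tL ?u) (mR ?u (mR a (mR ?u (tL ?u)))))"
      using u a by (simp add: mixR2)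
    also have "\<dots> = mR ?u (mR (tL ?u) (mR ?u (tL ?u)))" using u a by (simp add: auz)
    also have "\<dots> = mL ?u (tL ?u)" using u by (simp add: agree)
    finally show "mR (mL ?u (tL ?u)) (mR ?ua (mL ?u (tL ?u))) = mL ?u (tL ?u)" .
  qed (use u a in auto)
  let ?F = "mL (tL ?v) ?v"
  have tyv: "tL (mL y ?v) = ?F"
    by (rule Lt.t_uniq') (use y v in simp_all)
  have tF: "tL ?F = ?F" by (rule Lt.t_idem) (use v in simp_all)
  have tE: "tL (mL ?u (tL ?u)) = mL ?u (tL ?u)" by (rule Lt.t_idem) (use u in simp_all)
  define e where "e = star ?ua (mL y ?v)"
  have eS: "e \<in> S0" unfolding e_def using ua y by simp
  have uaI: "?ua \<in> idems R mR" unfolding idems_def using u a by (simp add: auz)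
  have yvI: "mL y ?v \<in> idems L mL" unfolding idems_def using y by simp
  have ee: "mL e e = e" using ax3[OF uaI yvI] unfolding e_def idems_def by simp
  have l1: "mL ?u (mL (tL ?u) e) = e"
    using L1[OF ua, of "mL y ?v"] y u eS unfolding tua tE e_def[symmetric] by simp
  have r1: "mL e ?F = e"
    using R1[OF ua, of "mL y ?v"] y v eS unfolding tyv tF e_def[symmetric] by simp
  have c: "tm (?u, ?u) (x,a) = (mL ?u (tL ?u), ?ua)" by (rule inv_c[OF x a xa])
  have d: "tm (y,b) (?v, ?v) = (mL y ?v, ?F)" by (rule inv_a[OF y b yb])
  have "tm (mL ?u (tL ?u), ?ua) (mL y ?v, ?F) = (e,e)"
    unfolding Tm tE e_def[symmetric] using l1 r1 eS u v tF by (simp add: agree)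
  hence "tm (tm (?u, ?u) (x,a)) (tm (y,b) (?v, ?v)) = (e,e)" unfolding c d .
  thus ?thesis using eS ee by blast
qed


definition T0 where "T0 = (\<lambda>s. (s,s)) ` S0"

lemma T0_subT: "T0 \<subseteq> T" unfolding T0_def using T0_sub by auto

lemma ex1T: assumes z: "z \<in> T" shows "\<exists>!y. y \<in> T0 \<and> is_inv tm z y"
proof -
  obtain x a where za: "z = (x,a)" by (cases z)
  have h: "x \<in> L" "a \<in> R" "tL x = tR a" using z unfolding za Tmem by auto
  show ?thesis
  proof (rule ex1I[of _ "(tL x, tL x)"])
    show "(tL x, tL x) \<in> T0 \<and> is_inv tm z (tL x, tL x)"
      unfolding za T0_def using T_inv[OF h] h by auto
    fix y assume "y \<in> T0 \<and> is_inv tm z y"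
    then obtain s where s: "s \<in> S0" "y = (s,s)" and i: "is_inv tm (x,a) (s,s)"
      unfolding T0_def za by auto
    show "y = (tL x, tL x)" using T_uniq[OF h s(1) i] s by simp
  qed
qed

lemma tinvT: assumes "x \<in> L" "a \<in> R" "tL x = tR a"
  shows "tinv tm T0 (x,a) = (tL x, tL x)"
proof -
  have z: "(x,a) \<in> T" using assms unfolding Tmem by simp
  show ?thesis unfolding tinv_def[of tm T0 "(x,a)"]
    by (rule the1_equality[OF ex1T[OF z]]) (use T_inv[OF assms] assms in \<open>auto simp: T0_def\<close>)
qed

lemma T_semigrp: "semigrp T tm"
  unfolding semigrp_def using T_closed T_assoc by blast

lemma part1: "regular_semigrp T tm \<and>
    (\<exists>T0. inverse_transversal T tm T0 \<and> multiplicative T tm T0 \<and> semigrp_isomorphic T0 tm S0 mL)"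
proof (intro conjI exI)
  show "regular_semigrp T tm"
    unfolding regular_semigrp_def
  proof (intro conjI ballI)
    show "semigrp T tm" by (rule T_semigrp)
    fix z assume z: "z \<in> T"
    then obtain y where "y \<in> T0" "is_inv tm z y" using ex1T by blast
    thus "\<exists>y\<in>T. tm (tm z y) z = z" using T0_subT unfolding is_inv_def by blast
  qed
  have sgT0: "semigrp T0 tm"
    unfolding semigrp_def
  proof (intro conjI ballI)
    fix p q assume "p \<in> T0" "q \<in> T0"
    thus "tm p q \<in> T0" unfolding T0_def using T0_prod by auto
  next
    fix p q r assume "p \<in> T0" "q \<in> T0" "r \<in> T0"
    thus "tm (tm p q) r = tm p (tm q r)" using T_assoc T0_subT by blast
  qed
  show "inverse_transversal T tm T0"
    unfolding inverse_transversal_def inverse_semigrp_def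
    using T0_subT sgT0 ex1T by blast
  show "multiplicative T tm T0"
    unfolding multiplicative_def
  proof (intro ballI)
    fix p q assume p: "p \<in> T" and q: "q \<in> T"
    obtain x a where pa: "p = (x,a)" by (cases p)
    obtain y b where qb: "q = (y,b)" by (cases q)
    have h: "x \<in> L" "a \<in> R" "tL x = tR a" "y \<in> L" "b \<in> R" "tL y = tR b"
      using p q unfolding pa qb Tmem by auto
    obtain e where e: "tm (tm (tL x, tL x) (x,a)) (tm (y,b) (tL y, tL y)) = (e,e)" "e \<in> S0" "mL e e = e"
      using T_mult[OF h] by blast
    have "(e,e) \<in> idems T0 tm" unfolding idems_def T0_def using e T0_prod by auto
    thus "tm (tm (tinv tm T0 p) p) (tm q (tinv tm T0 q)) \<in> idems T0 tm"
      unfolding pa qb tinvT[OF h(1-3)] tinvT[OF h(4-6)] e(1) .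
  qed
  show "semigrp_isomorphic T0 tm S0 mL"
    unfolding semigrp_isomorphic_def semigrp_iso_def
  proof (intro exI conjI)
    show "bij_betw fst T0 S0" unfolding bij_betw_def inj_on_def T0_def by force
    show "\<forall>x\<in>T0. \<forall>y\<in>T0. fst (tm x y) = mL (fst x) (fst y)"
      unfolding T0_def using T0_prod by auto
  qed
qed

end



locale mtr = itr S m S0 for S m S0 +
  assumes mult: "multiplicative S m S0"
begin

definition gg where "gg x y = m (t x) (m x (m y (t y)))"

lemma gg_S0: "x \<in> S \<Longrightarrow> y \<in> S \<Longrightarrow> gg x y \<in> S0"
  using mult unfolding multiplicative_def idems_def gg_def by auto
lemma gg_idem: "x \<in> S \<Longrightarrow> y \<in> S \<Longrightarrow> m (gg x y) (gg x y) = gg x y"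
  using mult unfolding multiplicative_def idems_def gg_def by auto

lemma gg_S: "x \<in> S \<Longrightarrow> y \<in> S \<Longrightarrow> gg x y \<in> S" using gg_S0 subD by blast

lemma LamS0: assumes x: "x \<in> S" and s: "s \<in> S0" shows "m (t x) (m x s) \<in> S0"
proof -
  have "m (gg x s) s \<in> S0" using gg_S0[of x s] x s by simp
  thus ?thesis using x s unfolding gg_def by simp
qed

lemma S0I: assumes y: "y \<in> S" and s: "s \<in> S0" shows "m s (m y (t y)) \<in> S0"
proof -
  have "m s (gg s y) \<in> S0" using gg_S0[of s y] y s by simp
  thus ?thesis using y s unfolding gg_def by simp
qed

lemma quasi: assumes x: "x \<in> S" and s: "s \<in> S0" and r: "r \<in> S0" shows "m s (m x r) \<in> S0"
proof -
  have "m (m s (m x (t x))) (m (t (t x)) (m (t x) (m x r))) \<in> S0"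
    using S0I[OF x s] LamS0[OF x r] x by simp
  thus ?thesis using x s r by simp
qed

lemma tmul_gen:
  assumes x: "x \<in> S" and y: "y \<in> S" and g: "g \<in> S0" and gI: "m g g = g"
    and xg: "m (t x) (m x g) = g" and gy: "m g (m y (t y)) = g" and xgy: "m x (m g y) = m x y"
  shows "t (m x y) = m (t y) (m g (t x))"
proof -
  have xgz: "\<And>z. z \<in> S \<Longrightarrow> m (t x) (m x (m g z)) = m g z"
  proof -
    fix z assume z: "z \<in> S"
    have "m (m (t x) (m x g)) z = m g z" using xg by simp
    thus "?thesis z" using x g z by simp
  qed
  have gyz: "\<And>z. z \<in> S \<Longrightarrow> m g (m y (m (t y) z)) = m g z"
  proof -
    fix z assume z: "z \<in> S"
    have "m (m g (m y (t y))) z = m g z" using gy by simp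
    thus "?thesis z" using y g z by simp
  qed
  have ggz: "\<And>z. z \<in> S \<Longrightarrow> m g (m g z) = m g z"
  proof -
    fix z assume z: "z \<in> S"
    have "m (m g g) z = m g z" using gI by simp
    thus "?thesis z" using g z by simp
  qed
  show ?thesis
  proof (rule t_uniq')
    have "m (m x (m g y)) (m (m (t y) (m g (t x))) (m x (m g y))) = m x (m g y)"
      using x y g by (simp add: xgz gyz ggz)
    thus "m (m x y) (m (m (t y) (m g (t x))) (m x y)) = m x y" by (simp only: xgy)
    have "m (m (t y) (m g (t x))) (m (m x (m g y)) (m (t y) (m g (t x)))) = m (t y) (m g (t x))"
      using x y g by (simp add: xgz gyz ggz)
    thus "m (m (t y) (m g (t x))) (m (m x y) (m (t y) (m g (t x)))) = m (t y) (m g (t x))"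
      by (simp only: xgy)
  qed (use x y g in auto)
qed

lemma tmul: assumes x: "x \<in> S" and y: "y \<in> S"
  shows "t (m x y) = m (t y) (m (gg x y) (t x))"
  by (rule tmul_gen) (use x y gg_S0[OF x y] gg_idem[OF x y] in \<open>auto simp: gg_def\<close>)

lemma t_idem_S: assumes e: "e \<in> S" "m e e = e" shows "m (t e) (t e) = t e"
proof -
  have ez: "\<And>z. z \<in> S \<Longrightarrow> m e (m e z) = m e z" using e by (metis assoc)
  have "gg e e = t e" unfolding gg_def using e by (simp add: ez)
  thus ?thesis using gg_idem[of e e] e by simp
qed


definition Lset where "Lset = {x \<in> S. m (t x) x = m (t x) (t (t x))}"

lemma S0_Lset: "S0 \<subseteq> Lset" unfolding Lset_def by auto

lemma L_yy: "y \<in> Lset \<Longrightarrow> m y (m (t y) (t (t y))) = y"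
  unfolding Lset_def by (auto simp flip: assoc) (metis assoc subD t1 t_mem)

lemma gfacts: assumes x: "x \<in> S" and y: "y \<in> S" and that: "z \<in> S"
  shows "m (t x) (m x (m (gg x y) z)) = m (gg x y) z"
    and "m (gg x y) (m y (m (t y) z)) = m (gg x y) z"
    and "m x (m (gg x y) y) = m x y"
    and "m (gg x y) (m (gg x y) z) = m (gg x y) z"
proof -
  show "m (t x) (m x (m (gg x y) z)) = m (gg x y) z" using x y that unfolding gg_def by simp
  show "m (gg x y) (m y (m (t y) z)) = m (gg x y) z" using x y that unfolding gg_def by simp
  show "m x (m (gg x y) y) = m x y" using x y unfolding gg_def by simp
  have "m (m (gg x y) (gg x y)) z = m (gg x y) z" using gg_idem[OF x y] by simp
  thus "m (gg x y) (m (gg x y) z) = m (gg x y) z" using x y that gg_S by simp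
qed

lemma L_closed: assumes x: "x \<in> Lset" and y: "y \<in> Lset" shows "m x y \<in> Lset"
proof -
  have xS: "x \<in> S" and yS: "y \<in> S" using x y unfolding Lset_def by auto
  define g where "g = gg x y"
  have g: "g \<in> S0" unfolding g_def using gg_S0 xS yS by simp
  note gf = gfacts[OF xS yS, folded g_def]
  have xx: "m (t x) x = m (t x) (t (t x))" using x unfolding Lset_def by auto
  have xxz: "\<And>z. z \<in> S \<Longrightarrow> m (t x) (m (t (t x)) z) = m (t x) (m x z)"
  proof -
    fix z assume z: "z \<in> S"
    have "m (m (t x) (t (t x))) z = m (m (t x) x) z" using xx by simp
    thus "?thesis z" using xS z by simp
  qed
  have tXY: "t (m x y) = m (t y) (m g (t x))" unfolding g_def by (rule tmul[OF xS yS])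
  have ttXY: "t (t (m x y)) = m (t (t x)) (m g (t (t y)))"
    unfolding tXY using g xS yS by (simp add: t_mult idem_t gg_idem g_def)
  have gyy: "m g (t (t y)) = m g y"
  proof -
    have "m g (t (t y)) = m g (m y (m (t y) (t (t y))))" using gf(2)[of "t (t y)"] yS by simp
    also have "\<dots> = m g y" using L_yy[OF y] by simp
    finally show ?thesis .
  qed
  have lhs: "m (t (m x y)) (m x y) = m (t y) (m g y)"
  proof -
    have "m (t (m x y)) (m x y) = m (t y) (m g (m (t x) (m x (m g y))))"
      unfolding tXY using gf(3) xS yS g by simp
    also have "\<dots> = m (t y) (m g y)" using gf(1,4) xS yS g by simp
    finally show ?thesis .
  qed
  have rhs: "m (t (m x y)) (t (t (m x y))) = m (t y) (m g y)"
  proof -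
    have "m (t (m x y)) (t (t (m x y))) = m (t y) (m g (m (t x) (m (t (t x)) (m g (t (t y))))))"
      unfolding ttXY unfolding tXY using xS yS g by simp
    also have "\<dots> = m (t y) (m g (m (t x) (m x (m g (t (t y))))))" using xxz xS yS g by simp
    also have "\<dots> = m (t y) (m g (t (t y)))" using gf(1,4) xS yS g by simp
    also have "\<dots> = m (t y) (m g y)" using gyy by simp
    finally show ?thesis .
  qed
  show ?thesis unfolding Lset_def using lhs rhs xS yS by simp
qed


lemma L_band: assumes e: "e \<in> idems Lset m" and f: "f \<in> idems Lset m"
  shows "m e f \<in> idems Lset m \<and> m (m e f) e = m e f"
proof -
  have eL: "e \<in> Lset" and ee: "m e e = e" and fL: "f \<in> Lset" and ff: "m f f = f"
    using e f unfolding idems_def by auto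
  have eS: "e \<in> S" and fS: "f \<in> S" using eL fL unfolding Lset_def by auto
  have eez: "\<And>z. z \<in> S \<Longrightarrow> m e (m e z) = m e z" using ee eS by (metis assoc)
  have ffz: "\<And>z. z \<in> S \<Longrightarrow> m f (m f z) = m f z" using ff fS by (metis assoc)
  have te: "m (t e) (t e) = t e" by (rule t_idem_S) (use eS ee in auto)
  have tf: "m (t f) (t f) = t f" by (rule t_idem_S) (use fS ff in auto)
  have tte: "t (t e) = t e" using te eS by (simp add: idem_t)
  have ttf: "t (t f) = t f" using tf fS by (simp add: idem_t)
  have E1: "m (t e) e = t e" using eL te tte unfolding Lset_def by simp
  have F1: "m (t f) f = t f" using fL tf ttf unfolding Lset_def by simp
  have E2: "m e (t e) = e"
  proof -
    have "m e (m (t e) e) = e" using eS by simp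
    thus ?thesis using E1 by simp
  qed
  have F2: "m f (t f) = f"
  proof -
    have "m f (m (t f) f) = f" using fS by simp
    thus ?thesis using F1 by simp
  qed
  have E1z: "\<And>z. z \<in> S \<Longrightarrow> m (t e) (m e z) = m (t e) z"
  proof - fix z assume z: "z \<in> S" have "m (m (t e) e) z = m (t e) z" using E1 by simp
    thus "?thesis z" using z eS by simp qed
  have E2z: "\<And>z. z \<in> S \<Longrightarrow> m e (m (t e) z) = m e z"
  proof - fix z assume z: "z \<in> S" have "m (m e (t e)) z = m e z" using E2 by simp
    thus "?thesis z" using z eS by simp qed
  have F2z: "\<And>z. z \<in> S \<Longrightarrow> m f (m (t f) z) = m f z"
  proof - fix z assume z: "z \<in> S" have "m (m f (t f)) z = m f z" using F2 by simp
    thus "?thesis z" using z fS by simp qed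
  define n where "n = m (t e) f"
  define k where "k = m (t f) e"
  have ngg: "n = gg e f" unfolding n_def gg_def using eS fS by (simp add: E1z F2)
  have F1z: "\<And>z. z \<in> S \<Longrightarrow> m (t f) (m f z) = m (t f) z"
  proof - fix z assume z: "z \<in> S" have "m (m (t f) f) z = m (t f) z" using F1 by simp
    thus "?thesis z" using z fS by simp qed
  have kgg: "k = gg f e" unfolding k_def gg_def using eS fS by (simp add: E2 F1z)
  have nS: "n \<in> S0" "m n n = n" unfolding ngg using gg_S0 gg_idem eS fS by auto
  have kS: "k \<in> S0" "m k k = k" unfolding kgg using gg_S0 gg_idem eS fS by auto
  have teS: "t e \<in> S0" and tfS: "t f \<in> S0" using eS fS by auto
  have c1: "m n (t e) = m (t e) n" by (rule idem_comm) (use nS teS te in auto)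
  have c2: "m (t f) n = m n (t f)" by (rule idem_comm) (use nS tfS tf in auto)
  have n1: "m (t e) n = n"
  proof - have "m (m (t e) (t e)) f = m (t e) f" using te by simp
    thus ?thesis unfolding n_def using eS fS by simp qed
  have n2: "m n (t f) = n" unfolding n_def using eS fS by (simp add: F2)
  have tef: "t (m e f) = n"
  proof -
    have "t (m e f) = m (t f) (m n (t e))" unfolding ngg by (rule tmul[OF eS fS])
    also have "\<dots> = n" using c1 c2 n1 n2 by simp
    finally show ?thesis .
  qed
  have tn: "t n = n" by (rule idem_t) (use nS in auto)
  have efL: "m e f \<in> Lset" by (rule L_closed[OF eL fL])
  have "m (t (m e f)) (m e f) = m (t (m e f)) (t (t (m e f)))" using efL unfolding Lset_def by simp
  hence H: "m n (m e f) = n" unfolding tef using nS tn by simp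
  have ck: "m n k = m k n" by (rule idem_comm) (use nS kS in auto)
  have nkf: "m n (m k f) = m n (m e f)" unfolding n_def k_def using eS fS by (simp add: F2z)
  have nf: "m n f = n" unfolding n_def using eS fS ff by simp
  have "n = m (m n k) f" using H nkf nS kS fS by simp
  also have "\<dots> = m k (m n f)" using ck nS kS fS by simp
  also have "\<dots> = m k n" using nf by simp
  finally have nk: "m n k = n" using ck by simp
  have efe: "m (m e f) e = m e f"
  proof -
    have "m (m e f) e = m e (m n k)" unfolding n_def k_def using eS fS by (simp add: E2z F2z)
    also have "\<dots> = m e n" using nk by simp
    also have "\<dots> = m e f" unfolding n_def using eS fS by (simp add: E2z)
    finally show ?thesis .
  qed
  have "m (m e f) (m e f) = m (m (m e f) e) f" using eS fS by simp
  also have "\<dots> = m e f" using efe eS fS ff by (simp add: ffz)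
  finally have "m (m e f) (m e f) = m e f" .
  thus ?thesis using efL efe unfolding idems_def by simp
qed

lemma L_left: "left_inverse_semigrp Lset m"
  unfolding left_inverse_semigrp_def regular_semigrp_def semigrp_def
proof (intro conjI ballI)
  show "\<And>x y. x \<in> Lset \<Longrightarrow> y \<in> Lset \<Longrightarrow> m x y \<in> Lset" by (rule L_closed)
  show "\<And>x y z. x \<in> Lset \<Longrightarrow> y \<in> Lset \<Longrightarrow> z \<in> Lset \<Longrightarrow> m (m x y) z = m x (m y z)"
    unfolding Lset_def by simp
  fix x assume "x \<in> Lset"
  hence x: "x \<in> S" unfolding Lset_def by simp
  show "\<exists>y\<in>Lset. m (m x y) x = x" using S0_Lset x by (intro bexI[of _ "t x"]) auto
next
  fix e f assume "e \<in> idems Lset m" "f \<in> idems Lset m"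
  thus "m e f \<in> idems Lset m" "m (m e f) e = m e f" using L_band by auto
qed

end



lemma is_inv_flip: assumes "semigrp S m" "x \<in> S" "y \<in> S"
  shows "is_inv (\<lambda>x y. m y x) x y = is_inv m x y"
proof -
  have "m (m x y) x = m x (m y x)" "m (m y x) y = m y (m x y)"
    using assms unfolding semigrp_def by blast+
  thus ?thesis unfolding is_inv_def by simp
qed

lemma semigrp_flip: assumes "semigrp S m" shows "semigrp S (\<lambda>x y. m y x)"
  unfolding semigrp_def
proof (intro conjI ballI)
  fix x y z assume "x \<in> S" "y \<in> S" "z \<in> S"
  thus "m z (m y x) = m (m z y) x" using assms unfolding semigrp_def by simp
next
  fix x y assume "x \<in> S" "y \<in> S"
  thus "m y x \<in> S" using assms unfolding semigrp_def by simp
qed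

context mtr begin

lemma flip_ex1: "x \<in> S \<Longrightarrow> (y \<in> S0 \<and> is_inv (\<lambda>x y. m y x) x y) = (y \<in> S0 \<and> is_inv m x y)"
  using is_inv_flip[OF sg] by auto

lemma tflip: "x \<in> S \<Longrightarrow> tinv (\<lambda>x y. m y x) S0 x = t x"
  unfolding tinv_def using flip_ex1 by simp

lemma flip: "mtr S (\<lambda>x y. m y x) S0"
proof -
  have sg0: "semigrp S0 m" using tr unfolding inverse_transversal_def inverse_semigrp_def by blast
  have ex0: "\<forall>x\<in>S0. \<exists>!y. y \<in> S0 \<and> is_inv m x y"
    using tr unfolding inverse_transversal_def inverse_semigrp_def by blast
  have e1: "\<forall>x\<in>S. \<exists>!y. y \<in> S0 \<and> is_inv (\<lambda>x y. m y x) x y"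
  proof
    fix x assume x: "x \<in> S"
    show "\<exists>!y. y \<in> S0 \<and> is_inv (\<lambda>x y. m y x) x y"
      unfolding flip_ex1[OF x] by (rule ex1[OF x])
  qed
  have e2: "\<forall>x\<in>S0. \<exists>!y. y \<in> S0 \<and> is_inv (\<lambda>x y. m y x) x y" using e1 sub by blast
  have i: "itr S (\<lambda>x y. m y x) S0"
    unfolding itr_def inverse_transversal_def inverse_semigrp_def
    using semigrp_flip[OF sg] semigrp_flip[OF sg0] sub e1 e2 by blast
  have "multiplicative S (\<lambda>x y. m y x) S0"
    unfolding multiplicative_def idems_def
  proof (intro ballI)
    fix x y assume x: "x \<in> S" and y: "y \<in> S"
    have "m (m (t y) y) (m x (t x)) \<in> idems S0 m" using mult x y unfolding multiplicative_def by blast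
    thus "m (m (tinv (\<lambda>x y. m y x) S0 y) y) (m x (tinv (\<lambda>x y. m y x) S0 x))
         \<in> {e \<in> S0. m e e = e}"
      using tflip x y unfolding idems_def by simp
  qed
  thus ?thesis using i unfolding mtr_def mtr_axioms_def by blast
qed

definition Rset where "Rset = {a \<in> S. m a (t a) = m (t (t a)) (t a)}"

lemma R_right: "right_inverse_semigrp Rset m"
proof -
  have FR: "mtr.Lset S (\<lambda>x y. m y x) S0 = Rset" unfolding mtr.Lset_def[OF flip] Rset_def using tflip by auto
  have lf: "left_inverse_semigrp Rset (\<lambda>x y. m y x)" using mtr.L_left[OF flip] FR by simp
  have RS: "Rset \<subseteq> S" unfolding Rset_def by auto
  have lcl: "\<And>x y. x \<in> Rset \<Longrightarrow> y \<in> Rset \<Longrightarrow> m y x \<in> Rset"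
    and lreg: "\<And>x. x \<in> Rset \<Longrightarrow> \<exists>y\<in>Rset. m x (m y x) = x"
    and lband: "\<And>e f. e \<in> idems Rset (\<lambda>x y. m y x) \<Longrightarrow> f \<in> idems Rset (\<lambda>x y. m y x) \<Longrightarrow>
        m f e \<in> idems Rset (\<lambda>x y. m y x) \<and> m e (m f e) = m f e"
    using lf unfolding left_inverse_semigrp_def regular_semigrp_def semigrp_def by auto
  have A: "\<forall>x\<in>Rset. \<forall>y\<in>Rset. m x y \<in> Rset" using lcl by blast
  have B: "\<forall>x\<in>Rset. \<forall>y\<in>Rset. \<forall>z\<in>Rset. m (m x y) z = m x (m y z)"
  proof (intro ballI)
    fix x y z assume "x \<in> Rset" "y \<in> Rset" "z \<in> Rset"
    hence "x \<in> S" "y \<in> S" "z \<in> S" using RS by auto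
    thus "m (m x y) z = m x (m y z)" by simp
  qed
  have C: "\<forall>x\<in>Rset. \<exists>y\<in>Rset. m (m x y) x = x"
  proof
    fix x assume x: "x \<in> Rset"
    then obtain y where y: "y \<in> Rset" and xy: "m x (m y x) = x"
      using lreg by blast
    have "x \<in> S" "y \<in> S" using x RS y by auto
    hence "m (m x y) x = x" using xy by simp
    thus "\<exists>y\<in>Rset. m (m x y) x = x" using y by blast
  qed
  have ie: "idems Rset (\<lambda>x y. m y x) = idems Rset m" unfolding idems_def by simp
  have D: "\<forall>e\<in>idems Rset m. \<forall>f\<in>idems Rset m. m e f \<in> idems Rset m \<and> m (m e f) e = m f e"
  proof (intro ballI)
    fix e f assume e: "e \<in> idems Rset m" and f: "f \<in> idems Rset m"
    have b1: "m e f \<in> idems Rset m" using lband[of f e] e f unfolding ie by simp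
    have b2: "m e (m f e) = m f e" using lband[of e f] e f unfolding ie by simp
    have "e \<in> S" "f \<in> S" using e f RS unfolding idems_def by auto
    hence "m (m e f) e = m f e" using b2 by simp
    with b1 show "m e f \<in> idems Rset m \<and> m (m e f) e = m f e" by simp
  qed
  show ?thesis
    unfolding right_inverse_semigrp_def regular_semigrp_def semigrp_def
    by (intro conjI A B C D)
qed
lemma S0_Rset: "S0 \<subseteq> Rset" unfolding Rset_def by auto
lemma Lset_S: "Lset \<subseteq> S" unfolding Lset_def by auto
lemma Rset_S: "Rset \<subseteq> S" unfolding Rset_def by auto

lemma R_au: "a \<in> Rset \<Longrightarrow> m a (t a) = m (t (t a)) (t a)" unfolding Rset_def by auto
lemma R_auz: assumes a: "a \<in> Rset" and z: "z \<in> S"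
  shows "m a (m (t a) z) = m (t (t a)) (m (t a) z)"
proof -
  have aS: "a \<in> S" using a Rset_S by auto
  have "m (m a (t a)) z = m (m (t (t a)) (t a)) z" using R_au[OF a] by simp
  thus ?thesis using aS z by simp
qed
lemma R_a: assumes a: "a \<in> Rset" shows "m (t (t a)) (m (t a) a) = a"
proof -
  have aS: "a \<in> S" using a Rset_S by auto
  have "m (t (t a)) (m (t a) a) = m a (m (t a) a)" by (rule R_auz[OF a aS, symmetric])
  also have "\<dots> = a" using aS by simp
  finally show ?thesis .
qed

lemma star_in2: assumes a: "a \<in> Rset" and x: "x \<in> Lset" shows "m a x \<in> S0"
proof -
  have aS: "a \<in> S" and xS: "x \<in> S" using a x Rset_S Lset_S by auto
  have "m (t (t a)) (m (gg a x) (t (t x))) \<in> S0" using gg_S0 aS xS by simp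
  moreover have "m (t (t a)) (m (gg a x) (t (t x))) = m a x"
    unfolding gg_def using aS xS L_yy[OF x] by (simp flip: R_auz[OF a])
  ultimately show ?thesis by simp
qed

lemma idemR: assumes e: "e \<in> idems Rset m" shows "m (t e) e = e"
proof -
  have eR: "e \<in> Rset" and ee: "m e e = e" and eS: "e \<in> S" using e Rset_S unfolding idems_def by auto
  have te: "m (t e) (t e) = t e" by (rule t_idem_S) (use eS ee in auto)
  have tte: "t (t e) = t e" using te eS by (simp add: idem_t)
  have "m e (t e) = t e" using R_au[OF eR] te tte by simp
  moreover have "m (m e (t e)) e = e" using eS by simp
  ultimately show ?thesis by simp
qed

lemma idemL: assumes f: "f \<in> idems Lset m" shows "m f (t f) = f"
proof -
  have fL: "f \<in> Lset" and ff: "m f f = f" and fS: "f \<in> S" using f Lset_S unfolding idems_def by auto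
  have tf: "m (t f) (t f) = t f" by (rule t_idem_S) (use fS ff in auto)
  have ttf: "t (t f) = t f" using tf fS by (simp add: idem_t)
  have "m (t f) f = t f" using fL tf ttf unfolding Lset_def by simp
  moreover have "m f (m (t f) f) = f" using fS by simp
  ultimately show ?thesis by simp
qed

lemma cdata: "construction_data S0 Lset m Rset m m"
proof -
  have inv0: "inverse_semigrp S0 m" using tr unfolding inverse_transversal_def by blast
  have e1L: "\<forall>x\<in>Lset. \<exists>!y. y \<in> S0 \<and> is_inv m x y" using ex1 Lset_S by blast
  have e1R: "\<forall>x\<in>Rset. \<exists>!y. y \<in> S0 \<and> is_inv m x y" using ex1 Rset_S by blast
  have itL: "inverse_transversal Lset m S0"
    unfolding inverse_transversal_def using S0_Lset inv0 e1L by (intro conjI)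
  have itR: "inverse_transversal Rset m S0"
    unfolding inverse_transversal_def using S0_Rset inv0 e1R by (intro conjI)
  have qL: "quasi_ideal Lset m S0" unfolding quasi_ideal_def
  proof (intro ballI)
    fix s x r assume "s \<in> S0" "x \<in> Lset" "r \<in> S0"
    moreover hence "x \<in> S" using Lset_S by auto
    ultimately show "m (m s x) r \<in> S0" using quasi by simp
  qed
  have qR: "quasi_ideal Rset m S0" unfolding quasi_ideal_def
  proof (intro ballI)
    fix s x r assume "s \<in> S0" "x \<in> Rset" "r \<in> S0"
    moreover hence "x \<in> S" using Rset_S by auto
    ultimately show "m (m s x) r \<in> S0" using quasi by simp
  qed
  have st: "\<forall>a\<in>Rset. \<forall>x\<in>Lset. m a x \<in> S0" using star_in2 by blast
  have a1: "\<forall>y\<in>Lset. \<forall>z\<in>Lset. \<forall>a\<in>Rset. \<forall>b\<in>Rset. t y = t b \<longrightarrow>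
        m (m (m a y) (m (t b) b)) z = m a (m (m y (t y)) (m b z))"
  proof (intro ballI impI)
    fix y z a b assume "y \<in> Lset" "z \<in> Lset" "a \<in> Rset" "b \<in> Rset" and yb: "t y = t b"
    hence "y \<in> S" "z \<in> S" "a \<in> S" "b \<in> S" using Lset_S Rset_S by auto
    thus "m (m (m a y) (m (t b) b)) z = m a (m (m y (t y)) (m b z))" using yb by simp
  qed
  have a3: "\<forall>e\<in>idems Rset m. \<forall>f\<in>idems Lset m. m e f \<in> idems S0 m"
  proof (intro ballI)
    fix e f assume e: "e \<in> idems Rset m" and f: "f \<in> idems Lset m"
    have eS: "e \<in> S" and fS: "f \<in> S" using e f Rset_S Lset_S unfolding idems_def by auto
    have "gg e f = m (m (t e) e) (m f (t f))" unfolding gg_def using eS fS by simp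
    hence "gg e f = m e f" using idemR[OF e] idemL[OF f] by simp
    moreover have "gg e f \<in> idems S0 m" using gg_S0[OF eS fS] gg_idem[OF eS fS] unfolding idems_def by simp
    ultimately show "m e f \<in> idems S0 m" by simp
  qed
  have ag: "\<forall>s\<in>S0. \<forall>r\<in>S0. m s r = m s r" by simp
  have a2: "\<forall>a\<in>Rset. \<forall>x\<in>Lset. a \<in> S0 \<longrightarrow> m a x = m a x" by simp
  have a2': "\<forall>a\<in>Rset. \<forall>x\<in>Lset. x \<in> S0 \<longrightarrow> m a x = m a x" by simp
  show ?thesis unfolding construction_data_def
    by (intro conjI inv0 L_left R_right itL itR qL qR st a1 a3 ag a2 a2')
qed

lemma cdat_inst: "cdat S0 Lset m Rset m m" unfolding cdat_def by (rule cdata)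

definition Phi where "Phi p = m (m (fst p) (t (fst p))) (snd p)"
definition psi where "psi z = (m z (m (t z) (t (t z))), m (t (t z)) (m (t z) z))"

lemma Tmem2: "(x,a) \<in> Tset S0 Lset m Rset m \<longleftrightarrow> x \<in> Lset \<and> a \<in> Rset \<and> t x = t a"
  by (simp add: Tset_def)

lemma Phi_hom: assumes p: "p \<in> Tset S0 Lset m Rset m" and q: "q \<in> Tset S0 Lset m Rset m"
  shows "Phi (Tmult S0 m m m p q) = m (Phi p) (Phi q)"
proof -
  obtain x a where pa: "p = (x,a)" by (cases p)
  obtain y b where qb: "q = (y,b)" by (cases q)
  have x: "x \<in> Lset" and a: "a \<in> Rset" and xa: "t x = t a" and y: "y \<in> Lset" and b: "b \<in> Rset"
    and yb: "t y = t b" using p q unfolding pa qb Tmem2 by auto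
  have xS: "x \<in> S" and aS: "a \<in> S" and yS: "y \<in> S" and bS: "b \<in> S"
    using x a y b Lset_S Rset_S by auto
  have tP: "t (m x (m (t x) (m a y))) = t (m a y)"
    using cdat.prodT(1)[OF cdat_inst x a xa y b yb] by simp
  have wz: "m a (m y (m (t (m a y)) (m a (m y z)))) = m a (m y z)" if z: "z \<in> S" for z
  proof -
    have "m (m a y) (m (t (m a y)) (m (m a y) z)) = m (m a y) z" by (rule t1') (use aS yS z in simp_all)
    thus ?thesis using aS yS z by (simp del: t1')
  qed
  have "Phi (Tmult S0 m m m p q) = m x (m (t x) (m a (m y (m (t b) b))))"
    unfolding pa qb Tmult_def Phi_def using xS aS yS bS tP by (simp add: wz)
  also have "\<dots> = m (Phi p) (Phi q)" unfolding pa qb Phi_def using xS aS yS bS yb by simp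
  finally show ?thesis .
qed

lemma psi_in: assumes z: "z \<in> S" shows "psi z \<in> Tset S0 Lset m Rset m"
proof -
  let ?X = "m z (m (t z) (t (t z)))" and ?A = "m (t (t z)) (m (t z) z)"
  have tX: "t ?X = t z" by (rule t_uniq') (use z in simp_all)
  have tA: "t ?A = t z" by (rule t_uniq') (use z in simp_all)
  have XL: "?X \<in> Lset" unfolding Lset_def using z tX by simp
  have AR: "?A \<in> Rset" unfolding Rset_def using z tA by simp
  show ?thesis unfolding psi_def Tmem2 using XL AR tX tA by simp
qed

lemma Phi_psi: "z \<in> S \<Longrightarrow> Phi (psi z) = z"
proof -
  assume z: "z \<in> S"
  have tX: "t (m z (m (t z) (t (t z)))) = t z" by (rule t_uniq') (use z in simp_all)
  show ?thesis unfolding Phi_def psi_def using z tX by simp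
qed

lemma psi_Phi: assumes p: "p \<in> Tset S0 Lset m Rset m" shows "psi (Phi p) = p"
proof -
  obtain x a where pa: "p = (x,a)" by (cases p)
  have x: "x \<in> Lset" and a: "a \<in> Rset" and xa: "t x = t a"
    using p unfolding pa Tmem2 by auto
  have xS: "x \<in> S" and aS: "a \<in> S" using x a Lset_S Rset_S by auto
  let ?u = "t x"
  have u: "?u \<in> S0" using xS by simp
  have aU: "m a ?u = m (t ?u) ?u" using R_au[OF a] xa by simp
  have aUz: "m a (m ?u w) = m (t ?u) (m ?u w)" if w: "w \<in> S" for w
    using R_auz[OF a w] xa by simp
  have Ra: "m (t ?u) (m ?u a) = a" using R_a[OF a] xa by simp
  let ?z = "m x (m ?u a)"
  have tz: "t ?z = ?u"
  proof (rule t_uniq')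
    show "m ?z (m ?u ?z) = ?z" using xS aS u by (simp add: aUz)
    show "m ?u (m ?z ?u) = ?u" using xS aS u by (simp add: aU)
  qed (use xS aS u in auto)
  have X: "m ?z (m (t ?z) (t (t ?z))) = x"
    unfolding tz using xS aS u L_yy[OF x] by (simp add: aUz)
  have A: "m (t (t ?z)) (m (t ?z) ?z) = a"
    unfolding tz using xS aS u Ra by simp
  show ?thesis unfolding pa Phi_def psi_def using X A xS aS by simp
qed

lemma part2: "semigrp_isomorphic (Tset S0 Lset m Rset m) (Tmult S0 m m m) S m"
  unfolding semigrp_isomorphic_def semigrp_iso_def
proof (intro exI conjI)
  show "bij_betw Phi (Tset S0 Lset m Rset m) S"
  proof (rule bij_betw_byWitness[where f' = psi])
    show "\<forall>a\<in>Tset S0 Lset m Rset m. psi (Phi a) = a" using psi_Phi by blast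
    show "\<forall>a'\<in>S. Phi (psi a') = a'" using Phi_psi by blast
    show "psi ` S \<subseteq> Tset S0 Lset m Rset m" using psi_in by blast
    show "Phi ` Tset S0 Lset m Rset m \<subseteq> S"
    proof
      fix z assume "z \<in> Phi ` Tset S0 Lset m Rset m"
      then obtain x a where xa: "(x,a) \<in> Tset S0 Lset m Rset m" and zz: "z = Phi (x,a)" by auto
      have "x \<in> S" "a \<in> S" using xa Lset_S Rset_S unfolding Tmem2 by auto
      thus "z \<in> S" unfolding zz Phi_def by simp
    qed
  qed
  show "\<forall>x\<in>Tset S0 Lset m Rset m. \<forall>y\<in>Tset S0 Lset m Rset m.
      Phi (Tmult S0 m m m x y) = m (Phi x) (Phi y)" using Phi_hom by blast
qed

end


theorem theorem4p4:
  fixes S0 L R :: "'a set" and mL mR star :: "'a \<Rightarrow> 'a \<Rightarrow> 'a"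
  assumes "construction_data S0 L mL R mR star"
  shows "(regular_semigrp (Tset S0 L mL R mR) (Tmult S0 mL mR star) \<and>
    (\<exists>T0. inverse_transversal (Tset S0 L mL R mR) (Tmult S0 mL mR star) T0 \<and>
          multiplicative (Tset S0 L mL R mR) (Tmult S0 mL mR star) T0 \<and>
          semigrp_isomorphic T0 (Tmult S0 mL mR star) S0 mL)) \<and>
    (\<forall>(S :: 'b set) (m :: 'b \<Rightarrow> 'b \<Rightarrow> 'b) S'.
           regular_semigrp S m \<and> inverse_transversal S m S' \<and> multiplicative S m S' \<longrightarrow>
           (\<exists>(S0' :: 'b set) L' mL' R' mR' star'. construction_data S0' L' mL' R' mR' star' \<and>
              semigrp_isomorphic (Tset S0' L' mL' R' mR') (Tmult S0' mL' mR' star') S m))"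
proof (intro conjI allI impI)
  have c: "cdat S0 L mL R mR star" unfolding cdat_def by (rule assms)
  show "regular_semigrp (Tset S0 L mL R mR) (Tmult S0 mL mR star)"
    using cdat.part1[OF c] by blast
  show "\<exists>T0. inverse_transversal (Tset S0 L mL R mR) (Tmult S0 mL mR star) T0 \<and>
          multiplicative (Tset S0 L mL R mR) (Tmult S0 mL mR star) T0 \<and>
          semigrp_isomorphic T0 (Tmult S0 mL mR star) S0 mL"
    using cdat.part1[OF c] by blast
next
  fix S :: "'b set" and m :: "'b \<Rightarrow> 'b \<Rightarrow> 'b" and S'
  assume h: "regular_semigrp S m \<and> inverse_transversal S m S' \<and> multiplicative S m S'"
  have mt: "mtr S m S'"
    unfolding mtr_def mtr_axioms_def itr_def using h unfolding regular_semigrp_def by blast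
  show "\<exists>(S0' :: 'b set) L' mL' R' mR' star'. construction_data S0' L' mL' R' mR' star' \<and>
              semigrp_isomorphic (Tset S0' L' mL' R' mR') (Tmult S0' mL' mR' star') S m"
    using mtr.cdata[OF mt] mtr.part2[OF mt] by blast
qed

end
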